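(* Under Assumption 1 and invertibility of $\widehat\Sigma$, it always holds that $$|v^\pi-\widehat v^\pi|\le\sum_{h=0}^H\sqrt{(\widehat\nu_h^\pi)^\top\widehat\Sigma^{-1}\widehat\nu_h^\pi}\sqrt{(\widehat W_h^\pi-w_h^\pi)^\top\widehat\Sigma(\widehat W_h^\pi-w_h^\pi)},$$ where $w_h^\pi\in\mathbb R^d$ satisfies $Q_h^\pi=\phi^\top w_h^\pi$ ($w_{H+1}^\pi=0$) and $\widehat W_h^\pi:=\widehat R+\widehat M^\pi w_{h+1}^\pi$.
   Context: MDP setting: $\mathcal X=\mathcal S\times\mathcal A$; mean reward $r$, transition kernel $p$; target policy $\pi$, horizon $H$, initial distribution $\xi_0$; $v^\pi=\mathbb E^\pi[\sum_{h=0}^Hr(s_h,a_h)\mid s_0\sim\xi_0]$; $Q_h^\pi(s,a)=\mathbb E^\pi[\sum_{h'=h}^Hr(s_{h'},a_{h'})\mid s_h=s,a_h=a]$, $Q_{H+1}^\pi=0$. $\phi:\mathcal X\to\mathbb R^d$, $\mathcal Q=\{\phi^\top w\}$, $\phi^\pi(s)=\int\phi(s,a)\pi(a\mid s)da$. Assumption 1: $r\in\mathcal Q$ and $\mathcal P^\pi\mathcal Q\subseteq\mathcal Q$, $\mathcal P^\pi f(s,a)=\mathbb E[f(s',a')\mid s,a]$, $s'\sim p(\cdot\mid s,a)$, $a'\sim\pi(\cdot\mid s')$. Data $\{(s_n,a_n,s_n',r_n')\}_{n=1}^N$ (arbitrary), $\lambda\ge0$, $\widehat\Sigma=\lambda I+\sum_n\phi(s_n,a_n)\phi(s_n,a_n)^\top$,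 $\widehat R=\widehat\Sigma^{-1}\sum_nr_n'\phi(s_n,a_n)$, $\widehat M^\pi=\widehat\Sigma^{-1}\sum_n\phi(s_n,a_n)\phi^\pi(s_n')^\top$, $\nu_0^\pi=\mathbb E[\phi(s,a)\mid s\sim\xi_0,a\sim\pi(\cdot\mid s)]$, $\widehat\nu_h^\pi=((\widehat M^\pi)^\top)^h\nu_0^\pi$, $\widehat w_{H+1}^\pi=0$, $\widehat w_h^\pi=\widehat R+\widehat M^\pi\widehat w_{h+1}^\pi$, $\widehat v^\pi=(\nu_0^\pi)^\top\widehat w_0^\pi$. *)

theory Defs
  imports "HOL-Analysis.Analysis" "HOL-Probability.Probability"
begin

text \<open>Transition kernel: p (s,a) is a measure on states; target policy: pol s is a measure on actions.\<close>

definition outer :: "real^'d \<Rightarrow> real^'d \<Rightarrow> real^'d^'d" where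
  "outer u v = (\<chi> i j. u $ i * v $ j)"

definition phi_pi :: "('s \<times> 'a \<Rightarrow> real^'d) \<Rightarrow> ('s \<Rightarrow> 'a measure) \<Rightarrow> 's \<Rightarrow> real^'d" where
  "phi_pi phi pol s = (\<integral>a. phi (s, a) \<partial>pol s)"

definition Ppi :: "('s \<times> 'a \<Rightarrow> 's measure) \<Rightarrow> ('s \<Rightarrow> 'a measure) \<Rightarrow> ('s \<times> 'a \<Rightarrow> real) \<Rightarrow> 's \<times> 'a \<Rightarrow> real" where
  "Ppi p pol f x = (\<integral>s'. (\<integral>a'. f (s', a') \<partial>pol s') \<partial>p x)"

fun Qsteps :: "('s \<times> 'a \<Rightarrow> real) \<Rightarrow> ('s \<times> 'a \<Rightarrow> 's measure) \<Rightarrow> ('s \<Rightarrow> 'a measure) \<Rightarrow> nat \<Rightarrow> 's \<times> 'a \<Rightarrow> real" where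
  "Qsteps r p pol 0 = (\<lambda>x. 0)"
| "Qsteps r p pol (Suc k) = (\<lambda>x. r x + Ppi p pol (Qsteps r p pol k) x)"

text \<open>Q_h^pi for horizon H (Q_{H+1} = 0): the expected sum of r from step h to H.\<close>
definition Qpi :: "('s \<times> 'a \<Rightarrow> real) \<Rightarrow> ('s \<times> 'a \<Rightarrow> 's measure) \<Rightarrow> ('s \<Rightarrow> 'a measure) \<Rightarrow> nat \<Rightarrow> nat \<Rightarrow> 's \<times> 'a \<Rightarrow> real" where
  "Qpi r p pol H h = Qsteps r p pol (Suc H - h)"

definition vpi :: "('s \<times> 'a \<Rightarrow> real) \<Rightarrow> ('s \<times> 'a \<Rightarrow> 's measure) \<Rightarrow> ('s \<Rightarrow> 'a measure) \<Rightarrow> nat \<Rightarrow> 's measure \<Rightarrow> real" where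
  "vpi r p pol H xi0 = (\<integral>s. (\<integral>a. Qpi r p pol H 0 (s, a) \<partial>pol s) \<partial>xi0)"

definition nu0 :: "('s \<times> 'a \<Rightarrow> real^'d) \<Rightarrow> ('s \<Rightarrow> 'a measure) \<Rightarrow> 's measure \<Rightarrow> real^'d" where
  "nu0 phi pol xi0 = (\<integral>s. phi_pi phi pol s \<partial>xi0)"

definition Sigma_hat :: "real \<Rightarrow> ('s \<times> 'a \<Rightarrow> real^'d) \<Rightarrow> nat \<Rightarrow> (nat \<Rightarrow> 's) \<Rightarrow> (nat \<Rightarrow> 'a) \<Rightarrow> real^'d^'d" where
  "Sigma_hat lam phi N sn an = lam *\<^sub>R mat 1 + (\<Sum>n\<in>{1..N}. outer (phi (sn n, an n)) (phi (sn n, an n)))"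

definition R_hat :: "real \<Rightarrow> ('s \<times> 'a \<Rightarrow> real^'d) \<Rightarrow> nat \<Rightarrow> (nat \<Rightarrow> 's) \<Rightarrow> (nat \<Rightarrow> 'a) \<Rightarrow> (nat \<Rightarrow> real) \<Rightarrow> real^'d" where
  "R_hat lam phi N sn an rn = matrix_inv (Sigma_hat lam phi N sn an) *v (\<Sum>n\<in>{1..N}. rn n *\<^sub>R phi (sn n, an n))"

definition M_hat :: "real \<Rightarrow> ('s \<times> 'a \<Rightarrow> real^'d) \<Rightarrow> ('s \<Rightarrow> 'a measure) \<Rightarrow> nat \<Rightarrow> (nat \<Rightarrow> 's) \<Rightarrow> (nat \<Rightarrow> 'a) \<Rightarrow> (nat \<Rightarrow> 's) \<Rightarrow> real^'d^'d" where
  "M_hat lam phi pol N sn an sn' = matrix_inv (Sigma_hat lam phi N sn an) ** (\<Sum>n\<in>{1..N}. outer (phi (sn n, an n)) (phi_pi phi pol (sn' n)))"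

definition nu_hat :: "real^'d^'d \<Rightarrow> real^'d \<Rightarrow> nat \<Rightarrow> real^'d" where
  "nu_hat M nu h = ((\<lambda>v. transpose M *v v) ^^ h) nu"

definition w_hat :: "real^'d \<Rightarrow> real^'d^'d \<Rightarrow> nat \<Rightarrow> nat \<Rightarrow> real^'d" where
  "w_hat R M H h = ((\<lambda>w. R + M *v w) ^^ (Suc H - h)) 0"

definition assumption1 :: "('s \<times> 'a \<Rightarrow> real) \<Rightarrow> ('s \<times> 'a \<Rightarrow> 's measure) \<Rightarrow> ('s \<Rightarrow> 'a measure) \<Rightarrow> ('s \<times> 'a \<Rightarrow> real^'d) \<Rightarrow> bool" where
  "assumption1 r p pol phi \<longleftrightarrow>
     (\<exists>w. \<forall>x. r x = phi x \<bullet> w) \<and>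
     (\<forall>w. \<exists>w'. \<forall>x. Ppi p pol (\<lambda>y. phi y \<bullet> w) x = phi x \<bullet> w')"

end

theory Submission
  imports Defs
begin

lemma outer_mv: "outer u v *v x = (v \<bullet> x) *\<^sub>R u"
  by (simp add: vec_eq_iff outer_def matrix_vector_mult_def inner_vec_def sum_distrib_left mult_ac)

lemma sum_mv: "sum f A *v x = (\<Sum>n\<in>A. f n *v x)"
  by (induction A rule: infinite_finite_induct) (auto simp: matrix_vector_mult_add_rdistrib)

lemma mat1_mv: "(c *\<^sub>R mat 1) *v x = c *\<^sub>R (x::real^'n)"
  by (metis matrix_vector_mul_lid scaleR_matrix_vector_assoc)

lemma Sig_form: "x \<bullet> (Sigma_hat lam phi N sn an *v y) = lam * (x \<bullet> y) + (\<Sum>n\<in>{1..N}. (phi (sn n, an n) \<bullet> y) * (phi (sn n, an n) \<bullet> x))"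
  unfolding Sigma_hat_def
  by (simp add: matrix_vector_mult_add_rdistrib sum_mv outer_mv mat1_mv inner_sum_right inner_add_right mult_ac inner_commute)

lemma Sig_sym: "x \<bullet> (Sigma_hat lam phi N sn an *v y) = y \<bullet> (Sigma_hat lam phi N sn an *v x)"
  by (simp add: Sig_form inner_commute mult_ac)

lemma Sig_psd: "lam \<ge> 0 \<Longrightarrow> x \<bullet> (Sigma_hat lam phi N sn an *v x) \<ge> 0"
  by (simp add: Sig_form sum_nonneg)

lemma CS_form:
  fixes S :: "real^'d^'d"
  assumes sym: "\<And>x y. x \<bullet> (S *v y) = y \<bullet> (S *v x)" and psd: "\<And>x. x \<bullet> (S *v x) \<ge> 0"
  shows "(y \<bullet> (S *v x))^2 \<le> (y \<bullet> (S *v y)) * (x \<bullet> (S *v x))"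
proof -
  define a where "a = y \<bullet> (S *v y)"
  define b where "b = y \<bullet> (S *v x)"
  define c where "c = x \<bullet> (S *v x)"
  have q: "0 \<le> a - 2 * t * b + t^2 * c" for t
  proof -
    have "0 \<le> (y - t *\<^sub>R x) \<bullet> (S *v (y - t *\<^sub>R x))" by (rule psd)
    also have "\<dots> = a - t * (x \<bullet> (S *v y)) - t * b + t^2 * c"
      by (simp add: a_def b_def c_def matrix_vector_mult_diff_distrib inner_diff_left inner_diff_right
          matrix_vector_mult_scaleR power2_eq_square algebra_simps)
    also have "x \<bullet> (S *v y) = b" using sym b_def by simp
    finally show ?thesis by (simp add: mult_ac)
  qed
  have "c \<ge> 0" using psd c_def by simp
  show ?thesis
  proof (cases "c = 0")
    case True
    have "b = 0"
    proof (rule ccontr)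
      assume "b \<noteq> 0"
      have "0 \<le> a - 2 * ((a + 1) / (2 * b)) * b" using q[of "(a+1)/(2*b)"] True by simp
      also have "\<dots> = -1" using \<open>b \<noteq> 0\<close> by (simp add: field_simps)
      finally show False by simp
    qed
    then show ?thesis using True by (simp add: a_def b_def c_def)
  next
    case False
    then have cp: "c > 0" using \<open>c \<ge> 0\<close> by simp
    have "0 \<le> a - 2 * (b/c) * b + (b/c)^2 * c" by (rule q)
    also have "\<dots> = (a * c - b^2) / c" using cp by (simp add: field_simps power2_eq_square)
    finally have "0 \<le> a * c - b^2" using cp by (simp add: zero_le_divide_iff)
    then show ?thesis by (simp add: a_def b_def c_def)
  qed
qed

lemma inv_right: "invertible (A::real^'n^'n) \<Longrightarrow> A ** matrix_inv A = mat 1"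
  unfolding invertible_def matrix_inv_def by (rule conjunct1, rule someI_ex) 

lemma CS_bound:
  assumes "lam \<ge> 0" "invertible (Sigma_hat lam phi N sn an)"
  shows "\<bar>nu \<bullet> x\<bar> \<le> sqrt (nu \<bullet> (matrix_inv (Sigma_hat lam phi N sn an) *v nu)) * sqrt (x \<bullet> (Sigma_hat lam phi N sn an *v x))"
proof -
  let ?S = "Sigma_hat lam phi N sn an"
  define y where "y = matrix_inv ?S *v nu"
  have Sy: "?S *v y = nu" unfolding y_def
    by (simp add: matrix_vector_mul_assoc inv_right[OF assms(2)])
  have e1: "nu \<bullet> x = y \<bullet> (?S *v x)" using Sy Sig_sym[of x lam phi N sn an y] by (simp add: inner_commute)
  have e2: "nu \<bullet> (matrix_inv ?S *v nu) = y \<bullet> (?S *v y)" using Sy y_def by (simp add: inner_commute)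
  have cs: "(y \<bullet> (?S *v x))^2 \<le> (y \<bullet> (?S *v y)) * (x \<bullet> (?S *v x))"
    by (rule CS_form) (auto intro: Sig_sym Sig_psd assms(1))
  have "\<bar>nu \<bullet> x\<bar> = sqrt ((y \<bullet> (?S *v x))^2)" using e1 by simp
  also have "\<dots> \<le> sqrt ((y \<bullet> (?S *v y)) * (x \<bullet> (?S *v x)))" using cs by (rule real_sqrt_le_mono)
  also have "\<dots> = sqrt (nu \<bullet> (matrix_inv ?S *v nu)) * sqrt (x \<bullet> (?S *v x))" using e2 by (simp add: real_sqrt_mult)
  finally show ?thesis .
qed

lemma telescope:
  fixes M :: "real^'d^'d"
  assumes "j \<le> Suc H"
  shows "nu \<bullet> (w 0 - w_hat R M H 0) = (\<Sum>h<j. nu_hat M nu h \<bullet> (w h - (R + M *v w (Suc h))))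
     + nu_hat M nu j \<bullet> (w j - w_hat R M H j)"
  using assms
proof (induction j)
  case 0
  then show ?case by (simp add: nu_hat_def)
next
  case (Suc j)
  have jH: "j \<le> H" using Suc by simp
  have wh: "w_hat R M H j = R + M *v w_hat R M H (Suc j)"
  proof -
    have "Suc H - j = Suc (Suc H - Suc j)" using jH by simp
    then show ?thesis unfolding w_hat_def by simp
  qed
  have nus: "nu_hat M nu (Suc j) = transpose M *v nu_hat M nu j" by (simp add: nu_hat_def)
  have tr: "a \<bullet> (M *v v) = (transpose M *v a) \<bullet> v" for a v
    by (metis dot_lmul_matrix vector_transpose_matrix transpose_transpose)
  have "nu_hat M nu j \<bullet> (w j - w_hat R M H j) = nu_hat M nu j \<bullet> (w j - (R + M *v w (Suc j)))
      + nu_hat M nu j \<bullet> (M *v (w (Suc j) - w_hat R M H (Suc j)))"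
    by (simp add: wh matrix_vector_mult_diff_distrib inner_diff_right inner_add_right)
  also have "nu_hat M nu j \<bullet> (M *v (w (Suc j) - w_hat R M H (Suc j))) = nu_hat M nu (Suc j) \<bullet> (w (Suc j) - w_hat R M H (Suc j))"
    by (simp add: tr nus)
  finally show ?case using Suc jH by simp
qed

theorem lemma15:
  fixes r :: "'s \<times> 'a \<Rightarrow> real"
    and p :: "'s \<times> 'a \<Rightarrow> 's measure"
    and pol :: "'s \<Rightarrow> 'a measure"
    and xi0 :: "'s measure"
    and phi :: "'s \<times> 'a \<Rightarrow> real^'d"
    and H N :: nat and lam :: real
    and sn :: "nat \<Rightarrow> 's" and an :: "nat \<Rightarrow> 'a" and sn' :: "nat \<Rightarrow> 's" and rn :: "nat \<Rightarrow> real"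
    and w :: "nat \<Rightarrow> real^'d"
  assumes "prob_space xi0"
    and "\<And>x. prob_space (p x)"
    and "\<And>s. prob_space (pol s)"
    and "\<And>s. s \<in> space xi0 \<Longrightarrow> integrable (pol s) (\<lambda>a. phi (s, a))"
    and "integrable xi0 (phi_pi phi pol)"
    and "assumption1 r p pol phi"
    and "lam \<ge> 0"
    and "invertible (Sigma_hat lam phi N sn an)"
    and "\<And>h. h \<le> H \<Longrightarrow> (\<forall>x. Qpi r p pol H h x = phi x \<bullet> w h)"
    and "w (Suc H) = 0"
  shows "\<bar>vpi r p pol H xi0 - nu0 phi pol xi0 \<bullet> w_hat (R_hat lam phi N sn an rn) (M_hat lam phi pol N sn an sn') H 0\<bar>
    \<le> (\<Sum>h\<in>{0..H}.
         sqrt (nu_hat (M_hat lam phi pol N sn an sn') (nu0 phi pol xi0) h \<bullet>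
               (matrix_inv (Sigma_hat lam phi N sn an) *v nu_hat (M_hat lam phi pol N sn an sn') (nu0 phi pol xi0) h))
       * sqrt ((R_hat lam phi N sn an rn + M_hat lam phi pol N sn an sn' *v w (Suc h) - w h) \<bullet>
               (Sigma_hat lam phi N sn an *v (R_hat lam phi N sn an rn + M_hat lam phi pol N sn an sn' *v w (Suc h) - w h))))"
proof -
  let ?S = "Sigma_hat lam phi N sn an"
  let ?R = "R_hat lam phi N sn an rn"
  let ?M = "M_hat lam phi pol N sn an sn'"
  let ?nu = "nu0 phi pol xi0"
  have Q0: "Qpi r p pol H 0 x = phi x \<bullet> w 0" for x using assms(9)[of 0] by blast
  have v: "vpi r p pol H xi0 = ?nu \<bullet> w 0"
  proof -
    have "vpi r p pol H xi0 = (\<integral>s. phi_pi phi pol s \<bullet> w 0 \<partial>xi0)"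
      unfolding vpi_def Q0
    proof (rule Bochner_Integration.integral_cong[OF refl])
      fix s assume "s \<in> space xi0"
      then show "(\<integral>a. phi (s, a) \<bullet> w 0 \<partial>pol s) = phi_pi phi pol s \<bullet> w 0"
        unfolding phi_pi_def using assms(4) by simp
    qed
    also have "\<dots> = ?nu \<bullet> w 0" unfolding nu0_def using assms(5) by simp
    finally show ?thesis .
  qed
  have tel: "?nu \<bullet> (w 0 - w_hat ?R ?M H 0) = (\<Sum>h<Suc H. nu_hat ?M ?nu h \<bullet> (w h - (?R + ?M *v w (Suc h))))"
    using telescope[of "Suc H" H ?nu w ?R ?M] by (simp add: w_hat_def assms(10))
  have "\<bar>vpi r p pol H xi0 - ?nu \<bullet> w_hat ?R ?M H 0\<bar> = \<bar>\<Sum>h\<in>{0..H}. nu_hat ?M ?nu h \<bullet> (?R + ?M *v w (Suc h) - w h)\<bar>"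
  proof -
    have "vpi r p pol H xi0 - ?nu \<bullet> w_hat ?R ?M H 0 = ?nu \<bullet> (w 0 - w_hat ?R ?M H 0)"
      by (simp add: v inner_diff_right)
    also have "\<dots> = - (\<Sum>h\<in>{0..H}. nu_hat ?M ?nu h \<bullet> (?R + ?M *v w (Suc h) - w h))"
      unfolding tel by (simp add: atLeast0AtMost lessThan_Suc_atMost sum_negf[symmetric] inner_diff_right)
    finally show ?thesis by simp
  qed
  also have "\<dots> \<le> (\<Sum>h\<in>{0..H}. \<bar>nu_hat ?M ?nu h \<bullet> (?R + ?M *v w (Suc h) - w h)\<bar>)"
    by (rule sum_abs)
  also have "\<dots> \<le> (\<Sum>h\<in>{0..H}. sqrt (nu_hat ?M ?nu h \<bullet> (matrix_inv ?S *v nu_hat ?M ?nu h))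
       * sqrt ((?R + ?M *v w (Suc h) - w h) \<bullet> (?S *v (?R + ?M *v w (Suc h) - w h))))"
    apply (rule sum_mono)
    apply (rule CS_bound[OF assms(7) assms(8)])
    done
  finally show ?thesis .
qed

end
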